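(* Let $\mathfrak R,\mathfrak R'$ be iterated graph systems satisfying (GR1)–(GR3), with replacement graphs $G_m$ and $G_m'$, and let $\varphi:\mathfrak R\to\mathfrak R'$ be a mapping between iterated graph systems. Then for every $m\in\mathbb N$ the map $\varphi_m:W_m\to W_m'$, $\varphi_m(w_1\cdots w_m):=\varphi(w_1)\cdots\varphi(w_m)$, is a mapping between the graphs $G_m\to G_m'$. If $\varphi$ is an isomorphism of iterated graph systems, then $\varphi_m:G_m\to G'_m$ is a graph isomorphism. Moreover, for every edge $\{w,v\}\in E(G_m)$, either $\varphi_m(w)=\varphi_m(v)$ or $|\varphi_m(w)\wedge\varphi_m(v)|=|w\wedge v|$.
   Context: A graph is a pair $(V,E)$ with $V$ finite non-empty and $E\subseteq V\times V$ such that $(x,y)\in E$ implies $(y,x)\notin E$; write $\{x,y\}\in E$ if $(x,y)\in E$ or $(y,x)\in E$. A mapping between graphs $\varphi:G\to G'$ is a function $V(G)\to V(G')$ such that for every $\{x,y\}\in E(G)$ either $\varphi(x)=\varphi(y)$ or $\{\varphi(x),\varphi(y)\}\in E(G')$; it is a graph isomorphism if it is bijective and $\varphi^{-1}$ is also a mapping between graphs. An iterated graph system (IGS) $\mathfrak R$ consists of a connected graph $G_1=(S,E)$, a finite set of types $\mathcal T$, a surjective typing $\mathfrak t:E\to\mathcal T$, and non-empty gluing rules $I_t\subseteq S\times S$ for $t\in\mathcal T$. With $W_m=S^m$, $[w]_k=w_1\cdots w_k$ and $|w\wedge v|=\min\{k:[w]_k\neq[v]_k\}$ for distinct equal-length words,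 the replacement graphs $G_m=(W_m,E_m)$ and their typings are defined recursively: $(w,v)\in E_{m+1}$ iff either (1) $[w]_m=[v]_m$ and $(w_{m+1},v_{m+1})\in E$ (type $\mathfrak t(w_{m+1},v_{m+1})$) or (2) $([w]_m,[v]_m)\in E_m$ and $(w_{m+1},v_{m+1})\in I_{\mathfrak t([w]_m,[v]_m)}$ (type $\mathfrak t([w]_m,[v]_m)$). (GR1)–(GR3): with $I_{t,+}$, $I_{t,-}$ the sets of first resp. second coordinates of $I_t$, $\mathfrak b^+_t(w)=|\{v:(w,v)\in I_t\}|$, $\mathfrak b^-_t(w)=|\{v:(v,w)\in I_t\}|$, and $\deg^+_t(w)$, $\deg^-_t(w)$ the numbers of outgoing, resp. incoming, edges of $G_1$ at $w$ of type $t$: (GR1) $\mathfrak b^\star_t(w)\in\{0,1\}$; (GR2) $\mathfrak b^\star_t(w)$ and $\deg^\star_t(w)$ are never both non-zero; (GR3) $I_{t,-}\cap I_{t,+}=\emptyset$. Given IGS $\mathfrak R=(G_1=(S,E),\mathcal T,\mathfrak t,(I_t))$ and $\mathfrak R'=(G_1'=(S',E'),\mathcal T',\mathfrak t',(I'_{t'}))$, a mapping of IGS $\varphi:\mathfrak R\to\mathfrak R'$ is a mapping between graphs $\varphi:G_1\to G_1'$ such that: (1) if $\varphi(w_1)=\varphi(v_1)$ for some edge $\{w_1,v_1\}\in E$ of type $t$, then $\varphi(w_2)=\varphi(v_2)$ for all $(w_2,v_2)\in I_t$; (2) if $(w_1,v_1)\in E$ has type $t$ and $(\varphi(w_1),\varphi(v_1))\in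 E'$ has type $t'$, then $(\varphi(w_2),\varphi(v_2))\in I'_{t'}$ for all $(w_2,v_2)\in I_t$; (3) if $(w_1,v_1)\in E$ has type $t$ and $(\varphi(v_1),\varphi(w_1))\in E'$ has type $t'$, then $(\varphi(v_2),\varphi(w_2))\in I'_{t'}$ for all $(w_2,v_2)\in I_t$. It is an isomorphism of IGS if it is a graph isomorphism $G_1\to G_1'$ and $\varphi^{-1}$ is also a mapping of IGS. *)

theory Defs
  imports Main
begin

definition is_graph :: "'a set \<Rightarrow> ('a \<times> 'a) set \<Rightarrow> bool" where
  "is_graph V E \<longleftrightarrow> finite V \<and> V \<noteq> {} \<and> E \<subseteq> V \<times> V \<and>
     (\<forall>x y. (x, y) \<in> E \<longrightarrow> (y, x) \<notin> E)"

definition uedge :: "('a \<times> 'a) set \<Rightarrow> 'a \<Rightarrow> 'a \<Rightarrow> bool" where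
  "uedge E x y \<longleftrightarrow> (x, y) \<in> E \<or> (y, x) \<in> E"

definition graph_connected :: "'a set \<Rightarrow> ('a \<times> 'a) set \<Rightarrow> bool" where
  "graph_connected V E \<longleftrightarrow> (\<forall>x\<in>V. \<forall>y\<in>V. (x, y) \<in> (E \<union> E\<inverse>)\<^sup>*)"

definition graph_mapping ::
  "'a set \<Rightarrow> ('a \<times> 'a) set \<Rightarrow> 'b set \<Rightarrow> ('b \<times> 'b) set \<Rightarrow> ('a \<Rightarrow> 'b) \<Rightarrow> bool" where
  "graph_mapping V E V' E' f \<longleftrightarrow> f ` V \<subseteq> V' \<and>
     (\<forall>x y. uedge E x y \<longrightarrow> f x = f y \<or> uedge E' (f x) (f y))"

definition graph_iso ::
  "'a set \<Rightarrow> ('a \<times> 'a) set \<Rightarrow> 'b set \<Rightarrow> ('b \<times> 'b) set \<Rightarrow> ('a \<Rightarrow> 'b) \<Rightarrow> bool" where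
  "graph_iso V E V' E' f \<longleftrightarrow> bij_betw f V V' \<and> graph_mapping V E V' E' f \<and>
     graph_mapping V' E' V E (inv_into V f)"

record ('a, 't) igs =
  igs_S :: "'a set"
  igs_E :: "('a \<times> 'a) set"
  igs_T :: "'t set"
  igs_typ :: "'a \<times> 'a \<Rightarrow> 't"
  igs_I :: "'t \<Rightarrow> ('a \<times> 'a) set"

definition is_igs :: "('a, 't) igs \<Rightarrow> bool" where
  "is_igs R \<longleftrightarrow> is_graph (igs_S R) (igs_E R) \<and> graph_connected (igs_S R) (igs_E R) \<and>
     finite (igs_T R) \<and> igs_typ R ` igs_E R = igs_T R \<and>
     (\<forall>t\<in>igs_T R. igs_I R t \<subseteq> igs_S R \<times> igs_S R \<and> igs_I R t \<noteq> {})"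

definition b_plus :: "('a, 't) igs \<Rightarrow> 't \<Rightarrow> 'a \<Rightarrow> nat" where
  "b_plus R t w = card {v. (w, v) \<in> igs_I R t}"
definition b_minus :: "('a, 't) igs \<Rightarrow> 't \<Rightarrow> 'a \<Rightarrow> nat" where
  "b_minus R t w = card {v. (v, w) \<in> igs_I R t}"
definition deg_plus :: "('a, 't) igs \<Rightarrow> 't \<Rightarrow> 'a \<Rightarrow> nat" where
  "deg_plus R t w = card {v. (w, v) \<in> igs_E R \<and> igs_typ R (w, v) = t}"
definition deg_minus :: "('a, 't) igs \<Rightarrow> 't \<Rightarrow> 'a \<Rightarrow> nat" where
  "deg_minus R t w = card {v. (v, w) \<in> igs_E R \<and> igs_typ R (v, w) = t}"

definition GR1 :: "('a, 't) igs \<Rightarrow> bool" where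
  "GR1 R \<longleftrightarrow> (\<forall>t\<in>igs_T R. \<forall>w\<in>igs_S R. b_plus R t w \<in> {0,1} \<and> b_minus R t w \<in> {0,1})"

definition GR2 :: "('a, 't) igs \<Rightarrow> bool" where
  "GR2 R \<longleftrightarrow> (\<forall>t\<in>igs_T R. \<forall>w\<in>igs_S R.
      \<not> (b_plus R t w \<noteq> 0 \<and> deg_plus R t w \<noteq> 0) \<and>
      \<not> (b_minus R t w \<noteq> 0 \<and> deg_minus R t w \<noteq> 0))"

definition GR3 :: "('a, 't) igs \<Rightarrow> bool" where
  "GR3 R \<longleftrightarrow> (\<forall>t\<in>igs_T R. snd ` igs_I R t \<inter> fst ` igs_I R t = {})"

definition words :: "('a, 't) igs \<Rightarrow> nat \<Rightarrow> 'a list set" where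
  "words R m = {w. length w = m \<and> set w \<subseteq> igs_S R}"

text \<open>Typed edges of the replacement graph G_m: triples (w, v, type).
  Words are lists w_1 ... w_m; the last letter is appended at the end.
  For m = 1 this gives exactly the edges of G_1 with their types.\<close>
fun typed_edges :: "('a, 't) igs \<Rightarrow> nat \<Rightarrow> ('a list \<times> 'a list \<times> 't) set" where
  "typed_edges R 0 = {}"
| "typed_edges R (Suc m) =
     {(w @ [a], w @ [b], igs_typ R (a, b)) | w a b.
         w \<in> words R m \<and> (a, b) \<in> igs_E R}
   \<union> {(w @ [a], v @ [b], t) | w v t a b.
         (w, v, t) \<in> typed_edges R m \<and> (a, b) \<in> igs_I R t}"

definition edges :: "('a, 't) igs \<Rightarrow> nat \<Rightarrow> ('a list \<times> 'a list) set" where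
  "edges R m = {(w, v). \<exists>t. (w, v, t) \<in> typed_edges R m}"

definition wedge :: "'a list \<Rightarrow> 'a list \<Rightarrow> nat" where
  "wedge w v = (LEAST k. take k w \<noteq> take k v)"

definition igs_mapping :: "('a, 't) igs \<Rightarrow> ('b, 's) igs \<Rightarrow> ('a \<Rightarrow> 'b) \<Rightarrow> bool" where
  "igs_mapping R R' f \<longleftrightarrow>
     graph_mapping (igs_S R) (igs_E R) (igs_S R') (igs_E R') f \<and>
     (\<forall>w1 v1. (w1, v1) \<in> igs_E R \<and> f w1 = f v1 \<longrightarrow>
        (\<forall>(w2, v2) \<in> igs_I R (igs_typ R (w1, v1)). f w2 = f v2)) \<and>
     (\<forall>w1 v1. (w1, v1) \<in> igs_E R \<and> (f w1, f v1) \<in> igs_E R' \<longrightarrow>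
        (\<forall>(w2, v2) \<in> igs_I R (igs_typ R (w1, v1)).
           (f w2, f v2) \<in> igs_I R' (igs_typ R' (f w1, f v1)))) \<and>
     (\<forall>w1 v1. (w1, v1) \<in> igs_E R \<and> (f v1, f w1) \<in> igs_E R' \<longrightarrow>
        (\<forall>(w2, v2) \<in> igs_I R (igs_typ R (w1, v1)).
           (f v2, f w2) \<in> igs_I R' (igs_typ R' (f v1, f w1))))"

definition igs_iso :: "('a, 't) igs \<Rightarrow> ('b, 's) igs \<Rightarrow> ('a \<Rightarrow> 'b) \<Rightarrow> bool" where
  "igs_iso R R' f \<longleftrightarrow>
     graph_iso (igs_S R) (igs_E R) (igs_S R') (igs_E R') f \<and>
     igs_mapping R R' f \<and> igs_mapping R' R (inv_into (igs_S R) f)"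

end

theory Submission
  imports Defs
begin

lemma wedge_split:
  assumes "x \<noteq> y"
  shows "wedge (p @ x # s) (p @ y # s') = Suc (length p)"
  unfolding wedge_def
proof (rule Least_equality)
  show "take (Suc (length p)) (p @ x # s) \<noteq> take (Suc (length p)) (p @ y # s')"
    using assms by simp
next
  fix k assume h: "take k (p @ x # s) \<noteq> take k (p @ y # s')"
  show "Suc (length p) \<le> k"
  proof (rule ccontr)
    assume "\<not> Suc (length p) \<le> k"
    then have "k \<le> length p" by simp
    then show False using h by simp
  qed
qed

lemma te_words:
  assumes "is_igs R" "(w, v, t) \<in> typed_edges R m"
  shows "w \<in> words R m \<and> v \<in> words R m \<and> t \<in> igs_T R"
  using assms(2)
proof (induction m arbitrary: w v t)
  case 0 then show ?case by simp
next
  case (Suc m)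
  have E: "igs_E R \<subseteq> igs_S R \<times> igs_S R" and T: "igs_typ R ` igs_E R = igs_T R"
    and I: "\<And>t. t \<in> igs_T R \<Longrightarrow> igs_I R t \<subseteq> igs_S R \<times> igs_S R"
    using assms(1) unfolding is_igs_def is_graph_def by auto
  from Suc.prems consider
      (new) w0 a b where "w = w0 @ [a]" "v = w0 @ [b]" "t = igs_typ R (a, b)"
        "w0 \<in> words R m" "(a, b) \<in> igs_E R"
    | (old) w0 v0 a b where "w = w0 @ [a]" "v = v0 @ [b]" "(w0, v0, t) \<in> typed_edges R m"
        "(a, b) \<in> igs_I R t"
    by auto
  then show ?case
  proof cases
    case new
    have "a \<in> igs_S R" "b \<in> igs_S R" "igs_typ R (a, b) \<in> igs_T R" using E T new(5) by blast+
    then show ?thesis using new by (simp add: words_def)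
  next
    case old
    from Suc.IH[OF old(3)] have "w0 \<in> words R m" "v0 \<in> words R m" "t \<in> igs_T R" by auto
    moreover have "a \<in> igs_S R" "b \<in> igs_S R" using I[OF \<open>t \<in> igs_T R\<close>] old(4) by blast+
    ultimately show ?thesis using old(1,2) by (simp add: words_def)
  qed
qed

lemma map_words:
  assumes "f ` igs_S R \<subseteq> igs_S R'" "w \<in> words R m"
  shows "map f w \<in> words R' m"
  using assms by (auto simp: words_def)

lemma inv_main:
  assumes R: "is_igs R" and R': "is_igs R'" and M: "igs_mapping R R' f"
    and "(w, v, t) \<in> typed_edges R m"
  shows "\<exists>p a1 b1 s s'. w = p @ a1 # s \<and> v = p @ b1 # s' \<and> (a1, b1) \<in> igs_E R \<and>
     igs_typ R (a1, b1) = t \<and>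
     ((f a1 = f b1 \<and> map f s = map f s') \<or>
      ((f a1, f b1) \<in> igs_E R' \<and>
        (map f w, map f v, igs_typ R' (f a1, f b1)) \<in> typed_edges R' m) \<or>
      ((f b1, f a1) \<in> igs_E R' \<and>
        (map f v, map f w, igs_typ R' (f b1, f a1)) \<in> typed_edges R' m))"
  using assms(4)
proof (induction m arbitrary: w v t)
  case 0 then show ?case by simp
next
  case (Suc m)
  have GM: "graph_mapping (igs_S R) (igs_E R) (igs_S R') (igs_E R') f"
    using M unfolding igs_mapping_def by blast
  have SS: "f ` igs_S R \<subseteq> igs_S R'" using GM unfolding graph_mapping_def by blast
  have C1: "\<And>w1 v1 w2 v2. (w1, v1) \<in> igs_E R \<Longrightarrow> f w1 = f v1 \<Longrightarrow>
      (w2, v2) \<in> igs_I R (igs_typ R (w1, v1)) \<Longrightarrow> f w2 = f v2"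
    using M unfolding igs_mapping_def by fast
  have C2: "\<And>w1 v1 w2 v2. (w1, v1) \<in> igs_E R \<Longrightarrow> (f w1, f v1) \<in> igs_E R' \<Longrightarrow>
      (w2, v2) \<in> igs_I R (igs_typ R (w1, v1)) \<Longrightarrow>
      (f w2, f v2) \<in> igs_I R' (igs_typ R' (f w1, f v1))"
    using M unfolding igs_mapping_def by fast
  have C3: "\<And>w1 v1 w2 v2. (w1, v1) \<in> igs_E R \<Longrightarrow> (f v1, f w1) \<in> igs_E R' \<Longrightarrow>
      (w2, v2) \<in> igs_I R (igs_typ R (w1, v1)) \<Longrightarrow>
      (f v2, f w2) \<in> igs_I R' (igs_typ R' (f v1, f w1))"
    using M unfolding igs_mapping_def by fast
  from Suc.prems consider
      (new) w0 a b where "w = w0 @ [a]" "v = w0 @ [b]" "t = igs_typ R (a, b)"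
        "w0 \<in> words R m" "(a, b) \<in> igs_E R"
    | (old) w0 v0 a b where "w = w0 @ [a]" "v = v0 @ [b]" "(w0, v0, t) \<in> typed_edges R m"
        "(a, b) \<in> igs_I R t"
    by auto
  then show ?case
  proof cases
    case new
    have mw: "map f w0 \<in> words R' m" using map_words[OF SS new(4)] .
    have "f a = f b \<or> uedge (igs_E R') (f a) (f b)"
      using GM new(5) unfolding graph_mapping_def uedge_def by blast
    then have "(f a = f b \<and> map f [] = map f []) \<or>
      ((f a, f b) \<in> igs_E R' \<and>
        (map f w, map f v, igs_typ R' (f a, f b)) \<in> typed_edges R' (Suc m)) \<or>
      ((f b, f a) \<in> igs_E R' \<and>
        (map f v, map f w, igs_typ R' (f b, f a)) \<in> typed_edges R' (Suc m))"
      unfolding uedge_def using new mw by auto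
    moreover have "w = w0 @ f0 # []" "v = w0 @ b # []" if "f0 = a" for f0 using new that by simp_all
    ultimately show ?thesis using new(3,5)
      by (intro exI[of _ w0] exI[of _ a] exI[of _ b] exI[of _ "[]"] exI[of _ "[]"]) simp
  next
    case old
    from Suc.IH[OF old(3)] obtain p a1 b1 s s' where
      H: "w0 = p @ a1 # s" "v0 = p @ b1 # s'" "(a1, b1) \<in> igs_E R" "igs_typ R (a1, b1) = t"
      and D: "(f a1 = f b1 \<and> map f s = map f s') \<or>
      ((f a1, f b1) \<in> igs_E R' \<and>
        (map f w0, map f v0, igs_typ R' (f a1, f b1)) \<in> typed_edges R' m) \<or>
      ((f b1, f a1) \<in> igs_E R' \<and>
        (map f v0, map f w0, igs_typ R' (f b1, f a1)) \<in> typed_edges R' m)"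
      by blast
    have ab: "(a, b) \<in> igs_I R (igs_typ R (a1, b1))" using old(4) H(4) by simp
    have "(f a1 = f b1 \<and> map f (s @ [a]) = map f (s' @ [b])) \<or>
      ((f a1, f b1) \<in> igs_E R' \<and>
        (map f w, map f v, igs_typ R' (f a1, f b1)) \<in> typed_edges R' (Suc m)) \<or>
      ((f b1, f a1) \<in> igs_E R' \<and>
        (map f v, map f w, igs_typ R' (f b1, f a1)) \<in> typed_edges R' (Suc m))"
    proof -
      { assume "f a1 = f b1 \<and> map f s = map f s'"
        then have ?thesis using C1[OF H(3) _ ab] by auto }
      moreover
      { assume h: "(f a1, f b1) \<in> igs_E R' \<and>
          (map f w0, map f v0, igs_typ R' (f a1, f b1)) \<in> typed_edges R' m"
        then have "(f a, f b) \<in> igs_I R' (igs_typ R' (f a1, f b1))" using C2[OF H(3) _ ab] by auto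
        then have "(map f w, map f v, igs_typ R' (f a1, f b1)) \<in> typed_edges R' (Suc m)"
          using h unfolding old(1,2) typed_edges.simps(2) by fastforce
        then have ?thesis using h by blast }
      moreover
      { assume h: "(f b1, f a1) \<in> igs_E R' \<and>
          (map f v0, map f w0, igs_typ R' (f b1, f a1)) \<in> typed_edges R' m"
        then have "(f b, f a) \<in> igs_I R' (igs_typ R' (f b1, f a1))" using C3[OF H(3) _ ab] by auto
        then have "(map f v, map f w, igs_typ R' (f b1, f a1)) \<in> typed_edges R' (Suc m)"
          using h unfolding old(1,2) typed_edges.simps(2) by fastforce
        then have ?thesis using h by blast }
      ultimately show ?thesis using D by blast
    qed
    moreover have "w = p @ a1 # (s @ [a])" "v = p @ b1 # (s' @ [b])" using H old(1,2) by simp_all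
    ultimately show ?thesis using H(3,4)
      by (intro exI[of _ p] exI[of _ a1] exI[of _ b1] exI[of _ "s @ [a]"] exI[of _ "s' @ [b]"] conjI) assumption+
  qed
qed


lemma te_irrefl: "is_igs R \<Longrightarrow> (a, b) \<in> igs_E R \<Longrightarrow> a \<noteq> b"
  unfolding is_igs_def is_graph_def by blast

lemma edges_words: "is_igs R \<Longrightarrow> (x, y) \<in> edges R m \<Longrightarrow> x \<in> words R m \<and> y \<in> words R m"
  unfolding edges_def using te_words by fast

lemma gm:
  assumes R: "is_igs R" and R': "is_igs R'" and M: "igs_mapping R R' f"
  shows "graph_mapping (words R m) (edges R m) (words R' m) (edges R' m) (map f)"
proof -
  have GM: "graph_mapping (igs_S R) (igs_E R) (igs_S R') (igs_E R') f"
    using M unfolding igs_mapping_def by blast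
  have SS: "f ` igs_S R \<subseteq> igs_S R'" using GM unfolding graph_mapping_def by blast
  have key: "map f x = map f y \<or> uedge (edges R' m) (map f x) (map f y)"
    if "(x, y, t) \<in> typed_edges R m" for x y t
    using inv_main[OF R R' M that] unfolding uedge_def edges_def by auto
  show ?thesis unfolding graph_mapping_def
  proof (intro conjI allI impI image_subsetI)
    fix x assume "x \<in> words R m" then show "map f x \<in> words R' m" using map_words[OF SS] by blast
  next
    fix x y assume "uedge (edges R m) x y"
    then obtain t where "(x, y, t) \<in> typed_edges R m \<or> (y, x, t) \<in> typed_edges R m"
      unfolding uedge_def edges_def by blast
    then show "map f x = map f y \<or> uedge (edges R' m) (map f x) (map f y)"
      using key unfolding uedge_def by metis
  qed
qed

lemma wedge_part:
  assumes R: "is_igs R" and R': "is_igs R'" and M: "igs_mapping R R' f"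
    and "(x, y, t) \<in> typed_edges R m"
  shows "map f x = map f y \<or> wedge (map f x) (map f y) = wedge x y"
    "map f y = map f x \<or> wedge (map f y) (map f x) = wedge y x"
proof -
  obtain p a1 b1 s s' where H: "x = p @ a1 # s" "y = p @ b1 # s'" "(a1, b1) \<in> igs_E R"
    and D: "(f a1 = f b1 \<and> map f s = map f s') \<or> (f a1, f b1) \<in> igs_E R' \<or> (f b1, f a1) \<in> igs_E R'"
    using inv_main[OF R R' M assms(4)] by blast
  have ne: "a1 \<noteq> b1" using te_irrefl[OF R H(3)] .
  { assume "f a1 = f b1 \<and> map f s = map f s'"
    then have "map f x = map f y" using H by simp }
  moreover
  { assume "f a1 \<noteq> f b1"
    then have "wedge (map f x) (map f y) = wedge x y" "wedge (map f y) (map f x) = wedge y x"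
      using H ne wedge_split by (simp_all add: wedge_split) }
  moreover have "(f a1, f b1) \<in> igs_E R' \<or> (f b1, f a1) \<in> igs_E R' \<Longrightarrow> f a1 \<noteq> f b1"
    using te_irrefl[OF R'] by metis
  ultimately show "map f x = map f y \<or> wedge (map f x) (map f y) = wedge x y"
    "map f y = map f x \<or> wedge (map f y) (map f x) = wedge y x" using D by metis+
qed

lemma iso_part:
  assumes R: "is_igs R" and R': "is_igs R'" and I: "igs_iso R R' f"
  shows "graph_iso (words R m) (edges R m) (words R' m) (edges R' m) (map f)"
proof -
  define g where "g = inv_into (igs_S R) f"
  have bij: "bij_betw f (igs_S R) (igs_S R')" and M: "igs_mapping R R' f"
    and M': "igs_mapping R' R g"
    using I unfolding igs_iso_def graph_iso_def g_def by auto
  have inj: "inj_on (map f) (words R m)"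
    apply (rule inj_on_mapI) using bij unfolding bij_betw_def words_def
    by (auto intro: inj_on_subset)
  have gS: "g ` igs_S R' \<subseteq> igs_S R" using bij unfolding g_def
    by (metis bij_betw_def image_subsetI inv_into_into)
  have fg: "\<And>b. b \<in> igs_S R' \<Longrightarrow> f (g b) = b" using bij unfolding g_def
    by (simp add: bij_betw_def f_inv_into_f)
  have inv: "inv_into (words R m) (map f) y = map g y" if "y \<in> words R' m" for y
  proof (rule inv_into_f_eq[OF inj])
    show "map g y \<in> words R m" using map_words[OF gS that] .
    show "map f (map g y) = y" using that fg by (auto simp: words_def map_idI subset_iff)
  qed
  have img: "map f ` words R m = words R' m"
  proof
    show "map f ` words R m \<subseteq> words R' m" using gm[OF R R' M] unfolding graph_mapping_def by blast
    show "words R' m \<subseteq> map f ` words R m"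
    proof
      fix y assume "y \<in> words R' m"
      then have "map g y \<in> words R m" "map f (map g y) = y"
        using map_words[OF gS] fg by (auto simp: words_def map_idI subset_iff)
      then show "y \<in> map f ` words R m" by (metis image_eqI)
    qed
  qed
  have gm2: "graph_mapping (words R' m) (edges R' m) (words R m) (edges R m) (map g)"
    using gm[OF R' R M'] .
  have "graph_mapping (words R' m) (edges R' m) (words R m) (edges R m) (inv_into (words R m) (map f))"
    unfolding graph_mapping_def
  proof (intro conjI allI impI image_subsetI)
    fix y assume "y \<in> words R' m" then show "inv_into (words R m) (map f) y \<in> words R m"
      using inv map_words[OF gS] by simp
  next
    fix x y assume u: "uedge (edges R' m) x y"
    have xy: "x \<in> words R' m" "y \<in> words R' m"
      using u edges_words[OF R'] unfolding uedge_def by blast+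
    show "inv_into (words R m) (map f) x = inv_into (words R m) (map f) y \<or>
      uedge (edges R m) (inv_into (words R m) (map f) x) (inv_into (words R m) (map f) y)"
      using gm2 u unfolding graph_mapping_def inv[OF xy(1)] inv[OF xy(2)] by blast
  qed
  then show ?thesis unfolding graph_iso_def bij_betw_def using inj img gm[OF R R' M] by blast
qed

theorem proposition3p12:
  fixes R :: "('a, 't) igs" and R' :: "('b, 's) igs" and \<phi> :: "'a \<Rightarrow> 'b"
  assumes "is_igs R" "GR1 R" "GR2 R" "GR3 R"
    and "is_igs R'" "GR1 R'" "GR2 R'" "GR3 R'"
    and "igs_mapping R R' \<phi>"
  shows "(\<forall>m\<ge>1. graph_mapping (words R m) (edges R m) (words R' m) (edges R' m) (map \<phi>))
    \<and> (igs_iso R R' \<phi> \<longrightarrow>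
         (\<forall>m\<ge>1. graph_iso (words R m) (edges R m) (words R' m) (edges R' m) (map \<phi>)))
    \<and> (\<forall>m\<ge>1. \<forall>w v. uedge (edges R m) w v \<longrightarrow>
         map \<phi> w = map \<phi> v \<or> wedge (map \<phi> w) (map \<phi> v) = wedge w v)"
  using gm[OF assms(1,5,9)] iso_part[OF assms(1,5)] wedge_part[OF assms(1,5,9)]
  unfolding uedge_def edges_def by blast

end
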